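(* Let $G$ be a finite simple graph with $n$ vertices that has an efficient dominating set. Then $\mathcal{C}^{min}(G)=n-\gamma(G)$.
   Context: A set $D\subseteq V(G)$ is a dominating set of $G$ if every vertex of $V(G)\setminus D$ has a neighbor in $D$; $\gamma(G)$ is the minimum cardinality of a dominating set, and dominating sets of that cardinality are called $\gamma$-sets. A dominating set $D$ is efficient if every vertex of $V(G)\setminus D$ is adjacent to exactly one vertex of $D$ and no vertex of $D$ is adjacent to another vertex of $D$. For $D\subseteq V(G)$, $\mathcal{C}_D(G)=\sum_{u\in D}\deg_G(u)$, and $\mathcal{C}^{min}(G)=\min\{\mathcal{C}_D(G): D \text{ a } \gamma\text{-set of } G\}$. *)

theory Defs
  imports Main
begin

definition simple_graph :: "'a set \<Rightarrow> ('a \<Rightarrow> 'a \<Rightarrow> bool) \<Rightarrow> bool" where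
  "simple_graph V E \<longleftrightarrow> finite V \<and> (\<forall>u v. E u v \<longrightarrow> u \<in> V \<and> v \<in> V)
     \<and> (\<forall>u v. E u v \<longrightarrow> E v u) \<and> (\<forall>v. \<not> E v v)"

definition nbhd :: "'a set \<Rightarrow> ('a \<Rightarrow> 'a \<Rightarrow> bool) \<Rightarrow> 'a \<Rightarrow> 'a set" where
  "nbhd V E v = {u \<in> V. E v u}"

definition degree :: "'a set \<Rightarrow> ('a \<Rightarrow> 'a \<Rightarrow> bool) \<Rightarrow> 'a \<Rightarrow> nat" where
  "degree V E v = card (nbhd V E v)"

definition dominating_set :: "'a set \<Rightarrow> ('a \<Rightarrow> 'a \<Rightarrow> bool) \<Rightarrow> 'a set \<Rightarrow> bool" where
  "dominating_set V E D \<longleftrightarrow> D \<subseteq> V \<and> (\<forall>v \<in> V - D. \<exists>u \<in> D. E v u)"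

definition domination_number :: "'a set \<Rightarrow> ('a \<Rightarrow> 'a \<Rightarrow> bool) \<Rightarrow> nat" where
  "domination_number V E = (LEAST k. \<exists>D. dominating_set V E D \<and> card D = k)"

definition gamma_set :: "'a set \<Rightarrow> ('a \<Rightarrow> 'a \<Rightarrow> bool) \<Rightarrow> 'a set \<Rightarrow> bool" where
  "gamma_set V E D \<longleftrightarrow> dominating_set V E D \<and> card D = domination_number V E"

definition efficient_dominating_set :: "'a set \<Rightarrow> ('a \<Rightarrow> 'a \<Rightarrow> bool) \<Rightarrow> 'a set \<Rightarrow> bool" where
  "efficient_dominating_set V E D \<longleftrightarrow> dominating_set V E D
     \<and> (\<forall>v \<in> V - D. card {u \<in> D. E v u} = 1)
     \<and> (\<forall>u \<in> D. \<forall>w \<in> D. \<not> E u w)"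

definition cost :: "'a set \<Rightarrow> ('a \<Rightarrow> 'a \<Rightarrow> bool) \<Rightarrow> 'a set \<Rightarrow> nat" where
  "cost V E D = (\<Sum>u\<in>D. degree V E u)"

definition cost_min :: "'a set \<Rightarrow> ('a \<Rightarrow> 'a \<Rightarrow> bool) \<Rightarrow> nat" where
  "cost_min V E = (LEAST c. \<exists>D. gamma_set V E D \<and> cost V E D = c)"

end

theory Submission
  imports Defs
begin

lemma cost_lower:
  assumes g: "simple_graph V E" and S: "dominating_set V E S"
  shows "card V - card S \<le> cost V E S"
proof -
  have fV: "finite V" using g by (simp add: simple_graph_def)
  have SV: "S \<subseteq> V" using S by (simp add: dominating_set_def)
  have fS: "finite S" using fV SV finite_subset by blast
  have sub: "V - S \<subseteq> (\<Union>u\<in>S. nbhd V E u)"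
  proof
    fix v assume v: "v \<in> V - S"
    then obtain u where "u \<in> S" "E v u" using S by (auto simp: dominating_set_def)
    moreover have "E u v" using \<open>E v u\<close> g by (simp add: simple_graph_def)
    ultimately show "v \<in> (\<Union>u\<in>S. nbhd V E u)" using v
      by (auto simp: nbhd_def)
  qed
  have "card V - card S = card (V - S)" using fV SV by (simp add: card_Diff_subset fS)
  also have "\<dots> \<le> card (\<Union>u\<in>S. nbhd V E u)"
  proof (rule card_mono)
    show "finite (\<Union>u\<in>S. nbhd V E u)" using fS fV by (auto simp: nbhd_def)
  qed (rule sub)
  also have "\<dots> \<le> (\<Sum>u\<in>S. card (nbhd V E u))" by (rule card_UN_le[OF fS])
  finally show ?thesis by (simp add: cost_def degree_def)
qed

lemma eff_le:
  assumes g: "simple_graph V E" and D: "efficient_dominating_set V E D"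
    and S: "dominating_set V E S"
  shows "card D \<le> card S"
proof -
  have fV: "finite V" using g by (simp add: simple_graph_def)
  have SV: "S \<subseteq> V" using S by (simp add: dominating_set_def)
  have DV: "D \<subseteq> V" using D by (simp add: efficient_dominating_set_def dominating_set_def)
  have fS: "finite S" using fV SV finite_subset by blast
  have ex: "\<forall>u\<in>D. \<exists>s. s \<in> S \<and> (s = u \<or> E u s)"
  proof
    fix u assume u: "u \<in> D"
    show "\<exists>s. s \<in> S \<and> (s = u \<or> E u s)"
    proof (cases "u \<in> S")
      case True then show ?thesis by blast
    next
      case False then show ?thesis using S u DV by (auto simp: dominating_set_def)
    qed
  qed
  then obtain f where f: "\<And>u. u \<in> D \<Longrightarrow> f u \<in> S \<and> (f u = u \<or> E u (f u))" using bchoice[OF ex] by blast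
  have indep: "\<And>u w. u \<in> D \<Longrightarrow> w \<in> D \<Longrightarrow> \<not> E u w"
    using D by (simp add: efficient_dominating_set_def)
  have sym: "\<And>u w. E u w \<Longrightarrow> E w u" using g by (simp add: simple_graph_def)
  have inE: "\<And>u w. E u w \<Longrightarrow> u \<in> V \<and> w \<in> V" using g by (simp add: simple_graph_def)
  have inj: "inj_on f D"
  proof
    fix u w assume u: "u \<in> D" and w: "w \<in> D" and eq: "f u = f w"
    show "u = w"
    proof (rule ccontr)
      assume ne: "u \<noteq> w"
      have Eu: "E u (f u)"
      proof -
        have "f u = u \<or> E u (f u)" using f[OF u] by blast
        moreover have "f u \<noteq> u"
        proof
          assume "f u = u"
          then have "f w = u" using eq by simp
          then have "E w u" using f[OF w] ne by auto
          then show False using indep[OF w u] by blast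
        qed
        ultimately show ?thesis by blast
      qed
      have Ew: "E w (f u)"
      proof -
        have "f w = w \<or> E w (f w)" using f[OF w] by blast
        moreover have "f w \<noteq> w"
        proof
          assume "f w = w"
          then have "f u = w" using eq by simp
          then have "E u w" using f[OF u] ne by auto
          then show False using indep[OF u w] by blast
        qed
        ultimately show ?thesis using eq by simp
      qed
      have nD: "f u \<notin> D" using indep[OF u] Eu by blast
      have fV': "f u \<in> V - D" using inE[OF Eu] nD by blast
      then have "card {x \<in> D. E (f u) x} = 1" using D by (simp add: efficient_dominating_set_def)
      then obtain z where "{x \<in> D. E (f u) x} = {z}" using card_1_singletonE by blast
      moreover have "u \<in> {x \<in> D. E (f u) x}" "w \<in> {x \<in> D. E (f u) x}"
        using u w sym Eu Ew by auto
      ultimately show False using ne by auto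
    qed
  qed
  have "f ` D \<subseteq> S" using f by auto
  then show ?thesis using card_inj_on_le[OF inj _ fS] by blast
qed

lemma eff_cost:
  assumes g: "simple_graph V E" and D: "efficient_dominating_set V E D"
  shows "cost V E D = card V - card D"
proof -
  have fV: "finite V" using g by (simp add: simple_graph_def)
  have DV: "D \<subseteq> V" using D by (simp add: efficient_dominating_set_def dominating_set_def)
  have fD: "finite D" using fV DV finite_subset by blast
  have indep: "\<And>u w. u \<in> D \<Longrightarrow> w \<in> D \<Longrightarrow> \<not> E u w"
    using D by (simp add: efficient_dominating_set_def)
  have sym: "\<And>u w. E u w \<Longrightarrow> E w u" using g by (simp add: simple_graph_def)
  have eq: "(\<Union>u\<in>D. nbhd V E u) = V - D"
  proof
    show "(\<Union>u\<in>D. nbhd V E u) \<subseteq> V - D" using indep by (auto simp: nbhd_def)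
    show "V - D \<subseteq> (\<Union>u\<in>D. nbhd V E u)"
    proof
      fix v assume v: "v \<in> V - D"
      have "\<exists>u\<in>D. E v u" using D v
        unfolding efficient_dominating_set_def dominating_set_def by blast
      then obtain u where "u \<in> D" "E v u" by blast
      then show "v \<in> (\<Union>u\<in>D. nbhd V E u)" using v sym by (auto simp: nbhd_def)
    qed
  qed
  have disj: "\<forall>u\<in>D. \<forall>w\<in>D. u \<noteq> w \<longrightarrow> nbhd V E u \<inter> nbhd V E w = {}"
  proof (intro ballI impI)
    fix u w assume u: "u \<in> D" and w: "w \<in> D" and ne: "u \<noteq> w"
    show "nbhd V E u \<inter> nbhd V E w = {}"
    proof (rule ccontr)
      assume "nbhd V E u \<inter> nbhd V E w \<noteq> {}"
      then obtain x where x: "x \<in> V" "E u x" "E w x" by (auto simp: nbhd_def)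
      have "x \<notin> D" using indep[OF u] x by blast
      then have "card {y \<in> D. E x y} = 1" using D x by (simp add: efficient_dominating_set_def)
      then obtain z where "{y \<in> D. E x y} = {z}" using card_1_singletonE by blast
      moreover have "u \<in> {y \<in> D. E x y}" "w \<in> {y \<in> D. E x y}" using u w x sym by auto
      ultimately show False using ne by auto
    qed
  qed
  have "cost V E D = (\<Sum>u\<in>D. card (nbhd V E u))" by (simp add: cost_def degree_def)
  also have "\<dots> = card (\<Union>u\<in>D. nbhd V E u)"
    by (rule card_UN_disjoint[symmetric]) (use fD fV disj in \<open>auto simp: nbhd_def\<close>)
  also have "\<dots> = card V - card D" using eq fV DV fD by (simp add: card_Diff_subset)
  finally show ?thesis .
qed

theorem mainTheorem3:
  fixes V :: "'a set" and E :: "'a \<Rightarrow> 'a \<Rightarrow> bool"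
  assumes "simple_graph V E"
    and "\<exists>D. efficient_dominating_set V E D"
  shows "cost_min V E = card V - domination_number V E"
proof -
  obtain D where D: "efficient_dominating_set V E D" using assms(2) by blast
  have Ddom: "dominating_set V E D" using D by (simp add: efficient_dominating_set_def)
  have le: "domination_number V E \<le> card D"
    unfolding domination_number_def by (rule Least_le) (use Ddom in blast)
  have "\<exists>S. dominating_set V E S \<and> card S = domination_number V E"
    unfolding domination_number_def by (rule LeastI) (use Ddom in blast)
  then obtain S where S: "dominating_set V E S" "card S = domination_number V E" by blast
  have gD: "card D = domination_number V E" using eff_le[OF assms(1) D S(1)] S(2) le by simp
  have gs: "gamma_set V E D" using Ddom gD by (simp add: gamma_set_def)
  show ?thesis unfolding cost_min_def
  proof (rule Least_equality)
    show "\<exists>D. gamma_set V E D \<and> cost V E D = card V - domination_number V E"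
      using gs eff_cost[OF assms(1) D] gD by auto
  next
    fix c assume "\<exists>D. gamma_set V E D \<and> cost V E D = c"
    then obtain T where "gamma_set V E T" "cost V E T = c" by blast
    then show "card V - domination_number V E \<le> c"
      using cost_lower[OF assms(1)] unfolding gamma_set_def by metis
  qed
qed

end
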